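(* Let $A\in\mathbb{R}^{m\times n}$, $b\in\mathbb{R}^m$, $\delta\ge0$ with $\{x:\|Ax-b\|\le\delta\}\neq\emptyset$. Run the exact penalty decomposition method described in the context with any $\epsilon>0$, $\sigma>1$, $\rho_0>0$. Then for each $k$ for which $v^k$ is generated, the subproblem $$\min_{x\in\mathbb{R}^n}\{\langle v^k,|x|\rangle:\ \|Ax-b\|\le\delta\}$$ has an optimal solution.
   Context: Exact penalty decomposition method: (S.0) Given a tolerance $\epsilon>0$ and a ratio $\sigma>1$, choose $\rho_0>0$, set $v^0=e$ (the all-ones vector in $\mathbb{R}^n$) and $k:=0$. (S.1) Choose $x^{k+1}\in\arg\min_{x\in\mathbb{R}^n}\{\langle v^k,|x|\rangle:\ \|Ax-b\|\le\delta\}$. (S.2) For each $i$, set $v^{k+1}_i=0$ if $|x^{k+1}_i|>1/\rho_k$ and $v^{k+1}_i=1$ otherwise. (S.3) If $\langle v^{k+1},|x^{k+1}|\rangle\le\epsilon$, stop; otherwise go to (S.4). (S.4) Set $\rho_{k+1}=\sigma\rho_k$, $k:=k+1$, and go to (S.1). Here $\|\cdot\|$ is the Euclidean norm and $|x|$ the componentwise absolute value. *)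

theory Defs
  imports "HOL-Analysis.Analysis"
begin

definition vabs :: "real ^ 'n \<Rightarrow> real ^ 'n" where
  "vabs x = (\<chi> i. \<bar>x $ i\<bar>)"

definition feas :: "real ^ 'n ^ 'm \<Rightarrow> real ^ 'm \<Rightarrow> real \<Rightarrow> (real ^ 'n) set" where
  "feas A b \<delta> = {x. norm (A *v x - b) \<le> \<delta>}"

definition sub_opt :: "real ^ 'n ^ 'm \<Rightarrow> real ^ 'm \<Rightarrow> real \<Rightarrow> real ^ 'n \<Rightarrow> real ^ 'n \<Rightarrow> bool" where
  "sub_opt A b \<delta> v x \<longleftrightarrow> x \<in> feas A b \<delta> \<and> (\<forall>y \<in> feas A b \<delta>. v \<bullet> vabs x \<le> v \<bullet> vabs y)"

text \<open>Sequences xs, vs, rhos are a run of the exact penalty decomposition method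
  (tolerance eps, ratio sigma, initial rho0) in which v^k has been generated:
  v^0 = e, rho_0 = rho0; for every iteration j < k, x^(j+1) solves subproblem j (S.1),
  v^(j+1) is given by (S.2); and if j+1 < k the method did not stop at (S.3) and
  rho_(j+1) = sigma rho_j (S.4).\<close>
definition epd_generated ::
  "real ^ 'n ^ 'm \<Rightarrow> real ^ 'm \<Rightarrow> real \<Rightarrow> real \<Rightarrow> real \<Rightarrow> real \<Rightarrow>
   (nat \<Rightarrow> real ^ 'n) \<Rightarrow> (nat \<Rightarrow> real ^ 'n) \<Rightarrow> (nat \<Rightarrow> real) \<Rightarrow> nat \<Rightarrow> bool" where
  "epd_generated A b \<delta> \<epsilon> \<sigma> \<rho>0 xs vs rhos k \<longleftrightarrow>
     vs 0 = (\<chi> i. 1) \<and> rhos 0 = \<rho>0 \<and>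
     (\<forall>j < k.
        sub_opt A b \<delta> (vs j) (xs (Suc j)) \<and>
        vs (Suc j) = (\<chi> i. if \<bar>xs (Suc j) $ i\<bar> > 1 / rhos j then 0 else 1) \<and>
        (Suc j < k \<longrightarrow> \<not> (vs (Suc j) \<bullet> vabs (xs (Suc j)) \<le> \<epsilon>) \<and> rhos (Suc j) = \<sigma> * rhos j))"

end

theory Submission
  imports Defs
begin

lemma obj_eq:
  fixes v x :: "real ^ 'n"
  assumes "\<forall>i. v $ i \<ge> 0"
  shows "v \<bullet> vabs x = (\<Sum>i\<in>UNIV. \<bar>(\<chi> i. v $ i * x $ i) $ i\<bar>)"
  using assms by (simp add: inner_vec_def vabs_def abs_mult)

lemma exists_min:
  fixes A :: "real ^ 'n ^ 'm" and b :: "real ^ 'm" and v :: "real ^ 'n"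
  assumes nn: "\<forall>i. v $ i \<ge> 0" and ne: "feas A b \<delta> \<noteq> {}"
  shows "\<exists>x. sub_opt A b \<delta> v x"
proof -
  define L where "L = (\<lambda>x::real^'n. (A *v x, (\<chi> i. v $ i * x $ i) :: real^'n))"
  define h where "h = (\<lambda>p::(real^'m) \<times> (real^'n). \<Sum>i\<in>UNIV. \<bar>snd p $ i\<bar>)"
  have objL: "v \<bullet> vabs x = h (L x)" for x
    using obj_eq[OF nn] by (simp add: L_def h_def)
  obtain x0 where x0: "x0 \<in> feas A b \<delta>" using ne by blast
  define c where "c = h (L x0)"
  have lin: "linear L"
    unfolding L_def
    by (rule linearI) (auto simp: matrix_vector_right_distrib matrix_vector_mult_scaleR
        vec_eq_iff algebra_simps)
  have sub: "subspace (range L)"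
    using linear_subspace_image[OF lin subspace_UNIV] .
  have cl1: "closed (range L)" using closed_subspace[OF sub] .
  have conth: "continuous_on S h" for S
    unfolding h_def by (intro continuous_intros)
  define K where "K = range L \<inter> {p. norm (fst p - b) \<le> \<delta>} \<inter> {p. h p \<le> c}"
  have clK: "closed K"
    unfolding K_def
    by (intro closed_Int cl1 closed_Collect_le conth continuous_intros)
  have bK: "bounded K"
  proof -
    have "norm p \<le> (norm b + \<delta>) + c" if "p \<in> K" for p
    proof -
      have a: "norm (fst p - b) \<le> \<delta>" and hc: "h p \<le> c" using that by (auto simp: K_def)
      have "norm (fst p) \<le> norm b + \<delta>" using a norm_triangle_ineq2[of "fst p" b] by linarith
      moreover have "norm (snd p) \<le> c" using hc norm_le_l1_cart[of "snd p"] by (simp add: h_def)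
      moreover have "norm p \<le> norm (fst p) + norm (snd p)"
        by (metis norm_Pair_le prod.collapse)
      ultimately show ?thesis by linarith
    qed
    then show ?thesis unfolding bounded_iff by blast
  qed
  have cK: "compact K" using clK bK compact_eq_bounded_closed by blast
  have "L x0 \<in> K" using x0 by (auto simp: K_def feas_def L_def c_def)
  then have neK: "K \<noteq> {}" by blast
  obtain p where pK: "p \<in> K" and pmin: "\<forall>q\<in>K. h p \<le> h q"
    using continuous_attains_inf[OF cK neK conth] by blast
  obtain x where px: "p = L x" using pK by (auto simp: K_def)
  have xf: "x \<in> feas A b \<delta>" using pK px by (auto simp: K_def feas_def L_def)
  have "v \<bullet> vabs x \<le> v \<bullet> vabs y" if "y \<in> feas A b \<delta>" for y
  proof (cases "h (L y) \<le> c")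
    case True
    then have "L y \<in> K" using that by (auto simp: K_def feas_def L_def)
    then show ?thesis using pmin px objL by auto
  next
    case False
    have "h p \<le> c" using pK by (auto simp: K_def)
    then show ?thesis using False px objL by auto
  qed
  then show ?thesis using xf unfolding sub_opt_def by blast
qed

theorem lemma3p3:
  fixes A :: "real ^ 'n ^ 'm" and b :: "real ^ 'm" and \<delta> \<epsilon> \<sigma> \<rho>0 :: real
    and xs vs :: "nat \<Rightarrow> real ^ 'n" and rhos :: "nat \<Rightarrow> real" and k :: nat
  assumes "\<delta> \<ge> 0" and "feas A b \<delta> \<noteq> {}"
    and "\<epsilon> > 0" and "\<sigma> > 1" and "\<rho>0 > 0"
    and "epd_generated A b \<delta> \<epsilon> \<sigma> \<rho>0 xs vs rhos k"
  shows "\<exists>x. sub_opt A b \<delta> (vs k) x"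
proof -
  have "\<forall>i. vs k $ i \<ge> 0"
  proof (cases k)
    case 0 then show ?thesis using assms(6) by (simp add: epd_generated_def)
  next
    case (Suc j)
    then have "j < k" by simp
    then show ?thesis using assms(6) Suc by (simp add: epd_generated_def)
  qed
  then show ?thesis using exists_min assms(2) by blast
qed

end
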